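(* For every $a\in(0,1)$, the map $(r,z)\mapsto H(r,z)$ is Lipschitz from $\mathcal A_2(a)\times\mathbb S^{n-1}$, equipped with $\|\cdot\|_2\times|\cdot|$, to $\mathbb R^n$.
   Context: $n\ge2$; $\mathbb S^{n-1}$ with surface measure $\sigma$, $\omega_n=\sigma(\mathbb S^{n-1})$; $\|\cdot\|_2$ the $L^2(\sigma)$ norm; $|\cdot|$ Euclidean norm; $C_+(\mathbb S^{n-1})$ strictly positive continuous functions. $(f\star g)(z):=\omega_n^{-1}\int f(\theta)g(\langle z,\theta\rangle)d\sigma(\theta)$. Fix $\eta_0\in(0,1)$ and $g(t)=\frac{c}{\omega_{n-1}}\eta_0^{-(n-1)}\phi(1-\frac{1-t}{\eta_0^2})$, $t\in[-1,1]$, with $\phi\ge0$ continuous, vanishing outside $[-1,1]$, $C^3$ on $[-1,1]$, $\|\phi\|_\infty=1$, $c>0$ with $1\star g\equiv1$; $\widetilde r:=r\star g$. Fix a locally Lipschitz $\alpha:(0,\infty)\times\mathbb S^{n-1}\to[0,\infty)$ with $0\le\alpha(\ell,z)<\ell$; $H(r,z):=\alpha(\widetilde r(z),z)z$. $\mathcal A_2(a):=\{r\in C_+:\inf r\ge a,\|r\|_2\le a^{-1}\}$. *)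

theory Defs
  imports "HOL-Analysis.Analysis"
begin

text \<open>Surface measure on the unit sphere of a Euclidean space, defined as the
cone measure: sigma(A) = n * lambda({t x : 0 < t < 1, x in A}), i.e. n times the
push-forward of Lebesgue measure on the punctured unit ball under x / |x|.\<close>
definition sph_measure :: "'a::euclidean_space measure" where
  "sph_measure = scale_measure (of_nat DIM('a))
     (distr (restrict_space lborel (ball 0 1 - {0})) (restrict_space borel (sphere 0 1))
        (\<lambda>x. x /\<^sub>R norm x))"

definition omega_sph :: "'a::euclidean_space itself \<Rightarrow> real" where
  "omega_sph _ = measure (sph_measure :: 'a measure) (sphere 0 1)"

text \<open>Area of the unit sphere S^{m-1} in R^m, as a function of the natural number m
(used for omega_{n-1}, which lives in a different dimension).\<close>
definition sphere_area :: "nat \<Rightarrow> real" where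
  "sphere_area m = 2 * pi powr (real m / 2) / Gamma (real m / 2)"

definition l2norm_sph :: "('a::euclidean_space \<Rightarrow> real) \<Rightarrow> real" where
  "l2norm_sph r = sqrt (integral\<^sup>L (sph_measure :: 'a measure) (\<lambda>\<theta>. (r \<theta>)\<^sup>2))"

definition sph_star :: "('a::euclidean_space \<Rightarrow> real) \<Rightarrow> (real \<Rightarrow> real) \<Rightarrow> 'a \<Rightarrow> real" where
  "sph_star f g z = (1 / omega_sph TYPE('a)) *
      integral\<^sup>L (sph_measure :: 'a measure) (\<lambda>\<theta>. f \<theta> * g (z \<bullet> \<theta>))"

definition locally_lipschitz_on :: "'a::metric_space set \<Rightarrow> ('a \<Rightarrow> 'b::metric_space) \<Rightarrow> bool" where
  "locally_lipschitz_on D f \<longleftrightarrow> (\<forall>p\<in>D. \<exists>e>0. \<exists>L. L-lipschitz_on (cball p e \<inter> D) f)"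

definition Cpos_sph :: "('a::euclidean_space \<Rightarrow> real) set" where
  "Cpos_sph = {r. continuous_on (sphere 0 1) r \<and> (\<forall>z\<in>sphere 0 1. r z > 0)}"

definition A2 :: "real \<Rightarrow> ('a::euclidean_space \<Rightarrow> real) set" where
  "A2 a = {r \<in> Cpos_sph. (\<forall>z\<in>sphere 0 1. a \<le> r z) \<and> l2norm_sph r \<le> 1 / a}"

definition C3_on_interval :: "(real \<Rightarrow> real) \<Rightarrow> bool" where
  "C3_on_interval \<phi> \<longleftrightarrow> (\<exists>\<phi>1 \<phi>2 \<phi>3.
     (\<forall>t\<in>{-1..1}. (\<phi> has_real_derivative \<phi>1 t) (at t within {-1..1})) \<and>
     (\<forall>t\<in>{-1..1}. (\<phi>1 has_real_derivative \<phi>2 t) (at t within {-1..1})) \<and>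
     (\<forall>t\<in>{-1..1}. (\<phi>2 has_real_derivative \<phi>3 t) (at t within {-1..1})) \<and>
     continuous_on {-1..1} \<phi>3)"

end

theory Submission
  imports Defs
begin


lemma space_sph: "space (sph_measure::'a::euclidean_space measure) = sphere 0 1"
  by (simp add: sph_measure_def space_scale_measure)

lemma sets_sph: "sets (sph_measure::'a::euclidean_space measure) = sets (restrict_space borel (sphere 0 1))"
  by (simp add: sph_measure_def space_scale_measure)

lemma meas_sph:
  assumes "continuous_on (sphere 0 1) f"
  shows "(f::'a::euclidean_space \<Rightarrow> real) \<in> borel_measurable sph_measure"
proof -
  have "f \<in> borel_measurable (restrict_space borel (sphere (0::'a) 1))"
    by (rule borel_measurable_continuous_on_restrict[OF assms])
  then show ?thesis using measurable_cong_sets[OF sets_sph refl] by blast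
qed

lemma finite_sph:
  assumes "omega_sph TYPE('a::euclidean_space) \<noteq> 0"
  shows "finite_measure (sph_measure::'a measure)"
proof (rule finite_measureI)
  show "emeasure (sph_measure::'a measure) (space sph_measure) \<noteq> \<infinity>"
    using assms unfolding omega_sph_def space_sph measure_def by auto
qed

lemma int_sph:
  assumes "omega_sph TYPE('a::euclidean_space) \<noteq> 0" "continuous_on (sphere 0 1) f"
  shows "integrable (sph_measure::'a measure) (f::'a \<Rightarrow> real)"
proof -
  interpret finite_measure "sph_measure::'a measure" by (rule finite_sph[OF assms(1)])
  have "compact (f ` sphere 0 1)" by (rule compact_continuous_image[OF assms(2)]) simp
  then obtain B where B: "\<forall>y\<in>f ` sphere 0 1. norm y \<le> B"
    using compact_imp_bounded bounded_iff by metis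
  show ?thesis
    apply (rule integrable_const_bound[where B=B])
     apply (rule AE_I2) using B apply (auto simp: space_sph)[1]
    by (rule meas_sph[OF assms(2)])
qed

lemma L1_L2:
  fixes f :: "'b \<Rightarrow> real"
  assumes fm: "finite_measure M" and i1: "integrable M f" and i2: "integrable M (\<lambda>x. (f x)\<^sup>2)"
    and w: "measure M (space M) > 0"
  shows "(\<integral>x. \<bar>f x\<bar> \<partial>M) \<le> sqrt (measure M (space M)) * sqrt (\<integral>x. (f x)\<^sup>2 \<partial>M)"
proof -
  interpret finite_measure M by fact
  define w where "w = measure M (space M)"
  define c where "c = (\<integral>x. \<bar>f x\<bar> \<partial>M)"
  define q where "q = (\<integral>x. (f x)\<^sup>2 \<partial>M)"
  have ia: "integrable M (\<lambda>x. \<bar>f x\<bar>)" using i1 by auto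
  have "(\<lambda>x. (w * \<bar>f x\<bar> - c)\<^sup>2) = (\<lambda>x. w\<^sup>2 * (f x)\<^sup>2 - (2*w*c) * \<bar>f x\<bar> + c\<^sup>2)"
    by (auto simp: power2_eq_square algebra_simps)
  then have "(\<integral>x. (w * \<bar>f x\<bar> - c)\<^sup>2 \<partial>M) = w\<^sup>2 * q - (2*w*c)*c + w * c\<^sup>2"
    using i2 ia by (simp add: integral_add integral_diff w_def c_def q_def)
  moreover have "0 \<le> (\<integral>x. (w * \<bar>f x\<bar> - c)\<^sup>2 \<partial>M)" by simp
  ultimately have "0 \<le> w * (w * q - c\<^sup>2)" by (simp add: power2_eq_square algebra_simps)
  then have "c\<^sup>2 \<le> w * q" using w w_def by (simp add: zero_le_mult_iff)
  then have "sqrt (c\<^sup>2) \<le> sqrt (w * q)" using real_sqrt_le_mono by blast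
  moreover have "c \<ge> 0" unfolding c_def by simp
  ultimately show ?thesis by (simp add: c_def w_def q_def real_sqrt_mult)
qed

lemma loclip_compact:
  assumes "locally_lipschitz_on D f" "compact K" "K \<subseteq> D"
  obtains L where "L-lipschitz_on K f"
proof -
  have "local_lipschitz {0::real} D (\<lambda>_. f)"
    using assms(1) unfolding local_lipschitz_def locally_lipschitz_on_def by (auto simp: less_imp_le) blast
  then have ll: "local_lipschitz {0::real} K (\<lambda>_. f)" by (rule local_lipschitz_subset) (use assms in auto)
  obtain L where "\<And>t. t \<in> {0::real} \<Longrightarrow> L-lipschitz_on K f"
    by (rule local_lipschitz_compact_implies_lipschitz[OF ll assms(2)]) auto
  then show ?thesis using that by auto
qed


context
  fixes g :: "real \<Rightarrow> real" and Bg Lg a :: real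
  assumes om: "omega_sph TYPE('a::euclidean_space) \<noteq> 0"
    and gc: "continuous_on {-1..1} g"
    and gb: "\<forall>t\<in>{-1..1}. 0 \<le> g t \<and> g t \<le> Bg"
    and gl: "\<forall>s\<in>{-1..1}. \<forall>t\<in>{-1..1}. \<bar>g s - g t\<bar> \<le> Lg * \<bar>s - t\<bar>"
    and nrm: "\<forall>z\<in>sphere (0::'a) 1. sph_star (\<lambda>_. 1) g z = 1"
    and apos: "a > 0"
begin

lemma inner_range: "z \<in> sphere (0::'b::real_inner) 1 \<Longrightarrow> \<theta> \<in> sphere 0 1 \<Longrightarrow> z \<bullet> \<theta> \<in> {-1..1}"
  using Cauchy_Schwarz_ineq2[of z \<theta>] by (auto simp: abs_le_iff)

lemma hc: "z \<in> sphere (0::'a) 1 \<Longrightarrow> continuous_on (sphere 0 1) (\<lambda>\<theta>. g (z \<bullet> \<theta>))"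
  by (rule continuous_on_compose2[OF gc]) (auto intro!: continuous_intros inner_range)

lemma om_pos: "omega_sph TYPE('a) > 0"
  using om unfolding omega_sph_def by (simp add: order_le_neq_trans)

lemma om_space: "omega_sph TYPE('a) = measure (sph_measure::'a measure) (space sph_measure)"
  unfolding omega_sph_def space_sph ..

lemma int_h: "z \<in> sphere (0::'a) 1 \<Longrightarrow> (\<integral>\<theta>. g (z \<bullet> \<theta>) \<partial>(sph_measure::'a measure)) = omega_sph TYPE('a)"
  using nrm om unfolding sph_star_def by (auto simp: field_simps)

lemma L1b:
  assumes "continuous_on (sphere 0 1) f"
  shows "(\<integral>\<theta>. \<bar>f \<theta>\<bar> \<partial>(sph_measure::'a measure)) \<le> sqrt (omega_sph TYPE('a)) * sqrt (\<integral>\<theta>. (f \<theta>)\<^sup>2 \<partial>sph_measure)"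
  unfolding om_space
  apply (rule L1_L2[OF finite_sph[OF om] int_sph[OF om assms]])
   apply (rule int_sph[OF om]) using assms apply (auto intro!: continuous_intros)[1]
  using om_pos om_space by simp

lemma A2D: "r \<in> A2 a \<Longrightarrow> continuous_on (sphere (0::'a) 1) r \<and> (\<forall>z\<in>sphere 0 1. a \<le> r z) \<and>
   sqrt (\<integral>\<theta>. (r \<theta>)\<^sup>2 \<partial>(sph_measure::'a measure)) \<le> 1 / a"
  unfolding A2_def Cpos_sph_def l2norm_sph_def by auto

lemma star_lower:
  assumes r: "r \<in> A2 a" and z: "z \<in> sphere (0::'a) 1"
  shows "a \<le> sph_star r g z"
proof -
  have rc: "continuous_on (sphere 0 1) r" and ra: "\<forall>z\<in>sphere 0 1. a \<le> r z" using A2D[OF r] by auto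
  have "(\<integral>\<theta>. a * g (z \<bullet> \<theta>) \<partial>(sph_measure::'a measure)) \<le> (\<integral>\<theta>. r \<theta> * g (z \<bullet> \<theta>) \<partial>sph_measure)"
    apply (rule integral_mono)
      apply (rule int_sph[OF om]) using hc[OF z] apply (auto intro!: continuous_intros)[1]
     apply (rule int_sph[OF om]) using hc[OF z] rc apply (auto intro!: continuous_intros)[1]
    using ra gb inner_range[OF z] by (auto simp: space_sph intro!: mult_right_mono)
  then have "a * omega_sph TYPE('a) \<le> (\<integral>\<theta>. r \<theta> * g (z \<bullet> \<theta>) \<partial>sph_measure)"
    using int_h[OF z] by simp
  then show ?thesis unfolding sph_star_def using om_pos by (simp add: field_simps)
qed


lemma star_upper:
  assumes r: "r \<in> A2 a" and z: "z \<in> sphere (0::'a) 1"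
  shows "sph_star r g z \<le> Bg * sqrt (omega_sph TYPE('a)) / (a * omega_sph TYPE('a))"
proof -
  have rc: "continuous_on (sphere 0 1) r" and ra: "\<forall>z\<in>sphere 0 1. a \<le> r z"
    and rl: "sqrt (\<integral>\<theta>. (r \<theta>)\<^sup>2 \<partial>(sph_measure::'a measure)) \<le> 1 / a" using A2D[OF r] by auto
  have Bg0: "Bg \<ge> 0" using gb[rule_format, of 0] by auto
  have "(\<integral>\<theta>. r \<theta> * g (z \<bullet> \<theta>) \<partial>(sph_measure::'a measure)) \<le> (\<integral>\<theta>. Bg * \<bar>r \<theta>\<bar> \<partial>sph_measure)"
    apply (rule integral_mono)
      apply (rule int_sph[OF om]) using hc[OF z] rc apply (auto intro!: continuous_intros)[1]
     apply (rule int_sph[OF om]) using rc apply (auto intro!: continuous_intros)[1]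
  proof -
    fix \<theta> assume "\<theta> \<in> space (sph_measure::'a measure)"
    then have th: "\<theta> \<in> sphere 0 1" by (simp add: space_sph)
    have r0: "r \<theta> \<ge> 0" using ra[rule_format, OF th] apos by linarith
    have "g (z \<bullet> \<theta>) \<le> Bg" using gb inner_range[OF z th] by blast
    then show "r \<theta> * g (z \<bullet> \<theta>) \<le> Bg * \<bar>r \<theta>\<bar>" using r0 by (simp add: mult.commute[of Bg] mult_left_mono)
  qed
  also have "\<dots> = Bg * (\<integral>\<theta>. \<bar>r \<theta>\<bar> \<partial>sph_measure)" by simp
  also have "\<dots> \<le> Bg * (sqrt (omega_sph TYPE('a)) * (1 / a))"
    apply (rule mult_left_mono[OF _ Bg0])
    apply (rule order.trans[OF L1b[OF rc]])
    apply (rule mult_left_mono[OF rl]) using om_pos by simp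
  finally show ?thesis unfolding sph_star_def using om_pos apos by (simp add: field_simps)
qed

lemma star_diff_r:
  assumes r1: "r1 \<in> A2 a" and r2: "r2 \<in> A2 a" and z: "z \<in> sphere (0::'a) 1"
  shows "\<bar>sph_star r1 g z - sph_star r2 g z\<bar> \<le> Bg * sqrt (omega_sph TYPE('a)) / omega_sph TYPE('a) * l2norm_sph (\<lambda>\<theta>. r1 \<theta> - r2 \<theta>)"
proof -
  have rc1: "continuous_on (sphere 0 1) r1" and rc2: "continuous_on (sphere 0 1) r2"
    using A2D[OF r1] A2D[OF r2] by auto
  have Bg0: "Bg \<ge> 0" using gb[rule_format, of 0] by auto
  have i1: "integrable (sph_measure::'a measure) (\<lambda>\<theta>. r1 \<theta> * g (z \<bullet> \<theta>))"
    apply (rule int_sph[OF om]) using hc[OF z] rc1 by (auto intro!: continuous_intros)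
  have i2: "integrable (sph_measure::'a measure) (\<lambda>\<theta>. r2 \<theta> * g (z \<bullet> \<theta>))"
    apply (rule int_sph[OF om]) using hc[OF z] rc2 by (auto intro!: continuous_intros)
  have "sph_star r1 g z - sph_star r2 g z = (1 / omega_sph TYPE('a)) *
      (\<integral>\<theta>. (r1 \<theta> - r2 \<theta>) * g (z \<bullet> \<theta>) \<partial>(sph_measure::'a measure))"
    unfolding sph_star_def using i1 i2 by (simp add: left_diff_distrib right_diff_distrib)
  moreover have "\<bar>\<integral>\<theta>. (r1 \<theta> - r2 \<theta>) * g (z \<bullet> \<theta>) \<partial>(sph_measure::'a measure)\<bar> \<le> (\<integral>\<theta>. Bg * \<bar>r1 \<theta> - r2 \<theta>\<bar> \<partial>sph_measure)"
    apply (rule integral_abs_bound_integral)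
      apply (rule int_sph[OF om]) using hc[OF z] rc1 rc2 apply (auto intro!: continuous_intros)[1]
     apply (rule int_sph[OF om]) using rc1 rc2 apply (auto intro!: continuous_intros)[1]
    using gb inner_range[OF z]
    by (auto simp: space_sph abs_mult mult.commute intro!: mult_right_mono)
  moreover have "(\<integral>\<theta>. Bg * \<bar>r1 \<theta> - r2 \<theta>\<bar> \<partial>(sph_measure::'a measure)) \<le> Bg * (sqrt (omega_sph TYPE('a)) * l2norm_sph (\<lambda>\<theta>. r1 \<theta> - r2 \<theta>))"
    apply simp
    apply (rule mult_left_mono[OF _ Bg0])
    unfolding l2norm_sph_def
    apply (rule L1b) using rc1 rc2 by (auto intro!: continuous_intros)
  ultimately have eq: "sph_star r1 g z - sph_star r2 g z = (1 / omega_sph TYPE('a)) *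
      (\<integral>\<theta>. (r1 \<theta> - r2 \<theta>) * g (z \<bullet> \<theta>) \<partial>(sph_measure::'a measure))"
    and bd: "\<bar>\<integral>\<theta>. (r1 \<theta> - r2 \<theta>) * g (z \<bullet> \<theta>) \<partial>(sph_measure::'a measure)\<bar> \<le> Bg * (sqrt (omega_sph TYPE('a)) * l2norm_sph (\<lambda>\<theta>. r1 \<theta> - r2 \<theta>))"
    by auto
  have "\<bar>sph_star r1 g z - sph_star r2 g z\<bar> = \<bar>\<integral>\<theta>. (r1 \<theta> - r2 \<theta>) * g (z \<bullet> \<theta>) \<partial>(sph_measure::'a measure)\<bar> / omega_sph TYPE('a)"
    unfolding eq using om_pos by (simp add: abs_mult)
  also have "\<dots> \<le> Bg * (sqrt (omega_sph TYPE('a)) * l2norm_sph (\<lambda>\<theta>. r1 \<theta> - r2 \<theta>)) / omega_sph TYPE('a)"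
    by (rule divide_right_mono[OF bd]) (use om_pos in simp)
  finally show ?thesis by (simp add: field_simps)
qed

lemma star_diff_z:
  assumes r: "r \<in> A2 a" and z1: "z1 \<in> sphere (0::'a) 1" and z2: "z2 \<in> sphere (0::'a) 1"
  shows "\<bar>sph_star r g z1 - sph_star r g z2\<bar> \<le> Lg * sqrt (omega_sph TYPE('a)) / (a * omega_sph TYPE('a)) * norm (z1 - z2)"
proof -
  have rc: "continuous_on (sphere 0 1) r"
    and rl: "sqrt (\<integral>\<theta>. (r \<theta>)\<^sup>2 \<partial>(sph_measure::'a measure)) \<le> 1 / a" using A2D[OF r] by auto
  have Lg0: "Lg \<ge> 0" using gl[rule_format, of 1 0] by (auto simp: zero_le_mult_iff)
  have i1: "integrable (sph_measure::'a measure) (\<lambda>\<theta>. r \<theta> * g (z1 \<bullet> \<theta>))"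
    apply (rule int_sph[OF om]) using hc[OF z1] rc by (auto intro!: continuous_intros)
  have i2: "integrable (sph_measure::'a measure) (\<lambda>\<theta>. r \<theta> * g (z2 \<bullet> \<theta>))"
    apply (rule int_sph[OF om]) using hc[OF z2] rc by (auto intro!: continuous_intros)
  have "sph_star r g z1 - sph_star r g z2 = (1 / omega_sph TYPE('a)) *
      (\<integral>\<theta>. r \<theta> * (g (z1 \<bullet> \<theta>) - g (z2 \<bullet> \<theta>)) \<partial>(sph_measure::'a measure))"
    unfolding sph_star_def using i1 i2 by (simp add: left_diff_distrib right_diff_distrib)
  moreover have "\<bar>\<integral>\<theta>. r \<theta> * (g (z1 \<bullet> \<theta>) - g (z2 \<bullet> \<theta>)) \<partial>(sph_measure::'a measure)\<bar> \<le> (\<integral>\<theta>. (Lg * norm (z1 - z2)) * \<bar>r \<theta>\<bar> \<partial>sph_measure)"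
  proof (rule integral_abs_bound_integral)
    show "integrable (sph_measure::'a measure) (\<lambda>\<theta>. r \<theta> * (g (z1 \<bullet> \<theta>) - g (z2 \<bullet> \<theta>)))"
      apply (rule int_sph[OF om]) using hc[OF z1] hc[OF z2] rc by (auto intro!: continuous_intros)
    show "integrable (sph_measure::'a measure) (\<lambda>\<theta>. (Lg * norm (z1 - z2)) * \<bar>r \<theta>\<bar>)"
      apply (rule int_sph[OF om]) using rc by (auto intro!: continuous_intros)
    fix \<theta> assume "\<theta> \<in> space (sph_measure::'a measure)"
    then have th: "\<theta> \<in> sphere 0 1" by (simp add: space_sph)
    have "\<bar>g (z1 \<bullet> \<theta>) - g (z2 \<bullet> \<theta>)\<bar> \<le> Lg * \<bar>z1 \<bullet> \<theta> - z2 \<bullet> \<theta>\<bar>"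
      using gl inner_range[OF z1 th] inner_range[OF z2 th] by blast
    also have "\<dots> \<le> Lg * norm (z1 - z2)"
      apply (rule mult_left_mono[OF _ Lg0])
      using Cauchy_Schwarz_ineq2[of "z1 - z2" \<theta>] th by (simp add: inner_diff_left)
    finally show "\<bar>r \<theta> * (g (z1 \<bullet> \<theta>) - g (z2 \<bullet> \<theta>))\<bar> \<le> (Lg * norm (z1 - z2)) * \<bar>r \<theta>\<bar>"
      by (simp add: abs_mult mult.commute mult_left_mono)
  qed
  moreover have "(\<integral>\<theta>. (Lg * norm (z1 - z2)) * \<bar>r \<theta>\<bar> \<partial>(sph_measure::'a measure)) \<le> (Lg * norm (z1 - z2)) * (sqrt (omega_sph TYPE('a)) * (1 / a))"
    apply (simp only: integral_mult_right_zero)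
    apply (rule mult_left_mono[OF _ mult_nonneg_nonneg[OF Lg0 norm_ge_zero]])
    apply (rule order.trans[OF L1b[OF rc]])
    apply (rule mult_left_mono[OF rl]) using om_pos by simp
  ultimately have eq: "sph_star r g z1 - sph_star r g z2 = (1 / omega_sph TYPE('a)) *
      (\<integral>\<theta>. r \<theta> * (g (z1 \<bullet> \<theta>) - g (z2 \<bullet> \<theta>)) \<partial>(sph_measure::'a measure))"
    and bd: "\<bar>\<integral>\<theta>. r \<theta> * (g (z1 \<bullet> \<theta>) - g (z2 \<bullet> \<theta>)) \<partial>(sph_measure::'a measure)\<bar> \<le> (Lg * norm (z1 - z2)) * (sqrt (omega_sph TYPE('a)) * (1 / a))"
    by auto
  have "\<bar>sph_star r g z1 - sph_star r g z2\<bar> = \<bar>\<integral>\<theta>. r \<theta> * (g (z1 \<bullet> \<theta>) - g (z2 \<bullet> \<theta>)) \<partial>(sph_measure::'a measure)\<bar> / omega_sph TYPE('a)"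
    unfolding eq using om_pos by (simp add: abs_mult)
  also have "\<dots> \<le> (Lg * norm (z1 - z2)) * (sqrt (omega_sph TYPE('a)) * (1 / a)) / omega_sph TYPE('a)"
    by (rule divide_right_mono[OF bd]) (use om_pos in simp)
  finally show ?thesis by (simp add: field_simps)
qed
end



lemma phi_lip:
  fixes \<phi> :: "real \<Rightarrow> real"
  assumes cont: "continuous_on UNIV \<phi>" and supp: "\<forall>t. t \<notin> {-1..1} \<longrightarrow> \<phi> t = 0"
    and C3: "C3_on_interval \<phi>"
  obtains Lp where "Lp \<ge> 0" "\<And>s t. s \<le> 1 \<Longrightarrow> t \<le> 1 \<Longrightarrow> \<bar>\<phi> s - \<phi> t\<bar> \<le> Lp * \<bar>s - t\<bar>"
proof -
  from C3 obtain \<phi>1 \<phi>2 where d1: "\<forall>t\<in>{-1..1}. (\<phi> has_real_derivative \<phi>1 t) (at t within {-1..1})"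
    and d2: "\<forall>t\<in>{-1..1}. (\<phi>1 has_real_derivative \<phi>2 t) (at t within {-1..1})"
    unfolding C3_on_interval_def by blast
  have c1: "continuous_on {-1..1} \<phi>1" by (rule DERIV_continuous_on) (use d2 in blast)
  have "compact (\<phi>1 ` {-1..1})" by (rule compact_continuous_image[OF c1]) simp
  then obtain B where B: "\<forall>y\<in>\<phi>1 ` {-1..1}. norm y \<le> B"
    using compact_imp_bounded bounded_iff by metis
  have B0: "B \<ge> 0" using B by force
  have in1: "\<bar>\<phi> s - \<phi> t\<bar> \<le> B * \<bar>s - t\<bar>" if "s \<in> {-1..1}" "t \<in> {-1..1}" for s t
    using field_differentiable_bound[of "{-1..1::real}" \<phi> \<phi>1 B s t] d1 B that by auto
  have lim: "(\<phi> \<longlongrightarrow> \<phi> (-1)) (at_left (-1))"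
    using cont by (meson UNIV_I continuous_on_def filterlim_at_split tendsto_within_open open_UNIV)
  have ev: "eventually (\<lambda>t. \<phi> t = 0) (at_left (-1::real))"
    using eventually_at_left_real[of "-2" "-1::real"] supp by (auto elim!: eventually_mono)
  have "(\<phi> \<longlongrightarrow> 0) (at_left (-1::real))"
    by (rule tendsto_eventually) (rule ev)
  then have pm1: "\<phi> (-1) = 0" using lim tendsto_unique trivial_limit_at_left_real by blast
  have "\<bar>\<phi> s - \<phi> t\<bar> \<le> B * \<bar>s - t\<bar>" if "s \<le> 1" "t \<le> 1" for s t
  proof (cases "s < -1")
    case True
    note s = this
    show ?thesis
    proof (cases "t < -1")
      case True then show ?thesis using s supp B0 by simp
    next
      case False
      then have "\<bar>\<phi> (-1) - \<phi> t\<bar> \<le> B * \<bar>-1 - t\<bar>" using in1[of "-1" t] that by auto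
      also have "\<dots> \<le> B * \<bar>s - t\<bar>" using s False B0 by (intro mult_left_mono) auto
      finally show ?thesis using pm1 supp s by simp
    qed
  next
    case False
    note s = this
    show ?thesis
    proof (cases "t < -1")
      case True
      then have "\<bar>\<phi> s - \<phi> (-1)\<bar> \<le> B * \<bar>s - -1\<bar>" using in1[of s "-1"] that s by auto
      also have "\<dots> \<le> B * \<bar>s - t\<bar>" using s True B0 by (intro mult_left_mono) auto
      finally show ?thesis using pm1 supp True by simp
    next
      case False then show ?thesis using in1 s that by auto
    qed
  qed
  then show ?thesis using that B0 by blast
qed

lemma g_props:
  fixes \<phi> g :: "real \<Rightarrow> real" and K0 \<eta> :: real
  assumes K0: "K0 \<ge> 0" and eta: "\<eta> > 0"
    and gdef: "\<forall>t\<in>{-1..1}. g t = K0 * \<phi> (1 - (1 - t) / \<eta>\<^sup>2)"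
    and cont: "continuous_on UNIV \<phi>" and supp: "\<forall>t. t \<notin> {-1..1} \<longrightarrow> \<phi> t = 0"
    and C3: "C3_on_interval \<phi>" and nn: "\<forall>t. 0 \<le> \<phi> t" and le1: "\<forall>t. \<bar>\<phi> t\<bar> \<le> 1"
  obtains Bg Lg where "continuous_on {-1..1} g" "\<forall>t\<in>{-1..1}. 0 \<le> g t \<and> g t \<le> Bg"
    "\<forall>s\<in>{-1..1}. \<forall>t\<in>{-1..1}. \<bar>g s - g t\<bar> \<le> Lg * \<bar>s - t\<bar>"
proof -
  obtain Lp where Lp: "Lp \<ge> 0" "\<And>s t. s \<le> 1 \<Longrightarrow> t \<le> 1 \<Longrightarrow> \<bar>\<phi> s - \<phi> t\<bar> \<le> Lp * \<bar>s - t\<bar>"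
    using phi_lip[OF cont supp C3] by blast
  have gc: "continuous_on {-1..1} g"
  proof -
    have "continuous_on {-1..1} (\<lambda>t. K0 * \<phi> (1 - (1 - t) / \<eta>\<^sup>2))"
      by (intro continuous_intros continuous_on_compose2[OF cont]) (use eta in auto)
    then show ?thesis using continuous_on_cong[OF refl, of "{-1..1}" g] gdef by auto
  qed
  have gb: "\<forall>t\<in>{-1..1}. 0 \<le> g t \<and> g t \<le> K0"
  proof
    fix t :: real assume t: "t \<in> {-1..1}"
    have "\<phi> (1 - (1 - t) / \<eta>\<^sup>2) \<le> 1" using le1 by (simp add: abs_le_iff)
    then show "0 \<le> g t \<and> g t \<le> K0" using gdef t nn K0
      by (simp add: mult_left_le)
  qed
  have gl: "\<forall>s\<in>{-1..1}. \<forall>t\<in>{-1..1}. \<bar>g s - g t\<bar> \<le> (K0 * Lp / \<eta>\<^sup>2) * \<bar>s - t\<bar>"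
  proof (intro ballI)
    fix s t :: real assume s: "s \<in> {-1..1}" and t: "t \<in> {-1..1}"
    have le: "1 - (1 - u) / \<eta>\<^sup>2 \<le> 1" if "u \<in> {-1..1}" for u
      using that eta by auto
    have "\<bar>g s - g t\<bar> = K0 * \<bar>\<phi> (1 - (1 - s) / \<eta>\<^sup>2) - \<phi> (1 - (1 - t) / \<eta>\<^sup>2)\<bar>"
      using gdef s t K0 by (simp add: right_diff_distrib[symmetric] abs_mult)
    also have "\<dots> \<le> K0 * (Lp * \<bar>(1 - (1 - s) / \<eta>\<^sup>2) - (1 - (1 - t) / \<eta>\<^sup>2)\<bar>)"
      by (rule mult_left_mono[OF Lp(2)[OF le[OF s] le[OF t]] K0])
    also have "\<bar>(1 - (1 - s) / \<eta>\<^sup>2) - (1 - (1 - t) / \<eta>\<^sup>2)\<bar> = \<bar>s - t\<bar> / \<eta>\<^sup>2"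
    proof -
      have "(1 - (1 - s) / \<eta>\<^sup>2) - (1 - (1 - t) / \<eta>\<^sup>2) = (s - t) / \<eta>\<^sup>2"
        using eta by (simp add: field_simps)
      then show ?thesis by (simp add: abs_divide)
    qed
    finally show "\<bar>g s - g t\<bar> \<le> (K0 * Lp / \<eta>\<^sup>2) * \<bar>s - t\<bar>" by simp
  qed
  show ?thesis using that[OF gc gb gl] .
qed


theorem proposition4p2:
  fixes \<eta>0 c :: real and \<phi> g :: "real \<Rightarrow> real"
    and \<alpha> :: "real \<Rightarrow> 'a::euclidean_space \<Rightarrow> real"
    and a :: real
  assumes dim: "DIM('a) \<ge> 2"
    and eta0: "0 < \<eta>0" "\<eta>0 < 1"
    and phi_nonneg: "\<forall>t. 0 \<le> \<phi> t"
    and phi_cont: "continuous_on UNIV \<phi>"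
    and phi_supp: "\<forall>t. t \<notin> {-1..1} \<longrightarrow> \<phi> t = 0"
    and phi_C3: "C3_on_interval \<phi>"
    and phi_sup: "(\<forall>t. \<bar>\<phi> t\<bar> \<le> 1) \<and> (\<exists>t. \<bar>\<phi> t\<bar> = 1)"
    and c_pos: "c > 0"
    and g_def: "\<forall>t\<in>{-1..1}. g t = c / sphere_area (DIM('a) - 1) * \<eta>0 powr (- real (DIM('a) - 1))
                                   * \<phi> (1 - (1 - t) / \<eta>0\<^sup>2)"
    and normalized: "\<forall>z\<in>sphere (0::'a) 1. sph_star (\<lambda>_. 1) g z = 1"
    and alpha_lip: "locally_lipschitz_on ({0<..} \<times> sphere (0::'a) 1) (\<lambda>(l, z). \<alpha> l z)"
    and alpha_bounds: "\<forall>l>0. \<forall>z\<in>sphere (0::'a) 1. 0 \<le> \<alpha> l z \<and> \<alpha> l z < l"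
    and a: "0 < a" "a < 1"
  shows "\<exists>L. \<forall>r1\<in>A2 a. \<forall>r2\<in>A2 a. \<forall>z1\<in>sphere (0::'a) 1. \<forall>z2\<in>sphere 0 1.
           norm (\<alpha> (sph_star r1 g z1) z1 *\<^sub>R z1 - \<alpha> (sph_star r2 g z2) z2 *\<^sub>R z2)
             \<le> L * (l2norm_sph (\<lambda>\<theta>. r1 \<theta> - r2 \<theta>) + norm (z1 - z2))"
  proof -
  let ?S = "sphere (0::'a) 1"
  define \<omega> where "\<omega> = omega_sph TYPE('a)"
  obtain b :: 'a where b: "b \<in> Basis" using nonempty_Basis by blast
  then have bS: "b \<in> ?S" by simp
  have om: "omega_sph TYPE('a) \<noteq> 0"
  proof
    assume "omega_sph TYPE('a) = 0"
    then have "sph_star (\<lambda>_. 1) g b = 0" unfolding sph_star_def by simp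
    with normalized bS show False by auto
  qed
  have sa: "sphere_area (DIM('a) - 1) > 0"
    unfolding sphere_area_def using dim by (intro divide_pos_pos Gamma_real_pos) auto
  define K0 where "K0 = c / sphere_area (DIM('a) - 1) * \<eta>0 powr (- real (DIM('a) - 1))"
  have K0: "K0 \<ge> 0" unfolding K0_def using sa c_pos by simp
  obtain Bg Lg where gc: "continuous_on {-1..1} g" and gb: "\<forall>t\<in>{-1..1}. 0 \<le> g t \<and> g t \<le> Bg"
    and gl: "\<forall>s\<in>{-1..1}. \<forall>t\<in>{-1..1}. \<bar>g s - g t\<bar> \<le> Lg * \<bar>s - t\<bar>"
    apply (rule g_props[OF K0 eta0(1) _ phi_cont phi_supp phi_C3 phi_nonneg, of g])
    using g_def phi_sup unfolding K0_def by auto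
  have Bg0: "Bg \<ge> 0" using gb[rule_format, of 0] by auto
  have Lg0: "Lg \<ge> 0" using gl[rule_format, of 1 0] by (auto simp: zero_le_mult_iff)
  have opos: "\<omega> > 0" using om_pos[OF om gc gb gl normalized a(1)] unfolding \<omega>_def .
  define M where "M = Bg * sqrt \<omega> / (a * \<omega>)"
  define Cr where "Cr = Bg * sqrt \<omega> / \<omega>"
  define Cz where "Cz = Lg * sqrt \<omega> / (a * \<omega>)"
  have Cr0: "Cr \<ge> 0" unfolding Cr_def using Bg0 opos by simp
  have Cz0: "Cz \<ge> 0" unfolding Cz_def using Lg0 opos a by simp
  have lo: "\<And>r z. r \<in> A2 a \<Longrightarrow> z \<in> ?S \<Longrightarrow> a \<le> sph_star r g z"
    using star_lower[OF om gc gb gl normalized a(1)] by blast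
  have up: "\<And>r z. r \<in> A2 a \<Longrightarrow> z \<in> ?S \<Longrightarrow> sph_star r g z \<le> M"
    using star_upper[OF om gc gb gl normalized a(1)] unfolding M_def \<omega>_def by blast
  have dr: "\<And>r1 r2 z. r1 \<in> A2 a \<Longrightarrow> r2 \<in> A2 a \<Longrightarrow> z \<in> ?S \<Longrightarrow>
      \<bar>sph_star r1 g z - sph_star r2 g z\<bar> \<le> Cr * l2norm_sph (\<lambda>\<theta>. r1 \<theta> - r2 \<theta>)"
    using star_diff_r[OF om gc gb gl normalized a(1)] unfolding Cr_def \<omega>_def by blast
  have dz: "\<And>r z1 z2. r \<in> A2 a \<Longrightarrow> z1 \<in> ?S \<Longrightarrow> z2 \<in> ?S \<Longrightarrow>
      \<bar>sph_star r g z1 - sph_star r g z2\<bar> \<le> Cz * norm (z1 - z2)"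
    using star_diff_z[OF om gc gb gl normalized a(1)] unfolding Cz_def \<omega>_def by blast
  define K where "K = {a..max M a} \<times> ?S"
  have Kc: "compact K" unfolding K_def by (intro compact_Times compact_Icc compact_sphere)
  have KD: "K \<subseteq> {0<..} \<times> ?S" unfolding K_def using a by auto
  obtain La where La: "La-lipschitz_on K (\<lambda>(l, z). \<alpha> l z)"
    using loclip_compact[OF alpha_lip Kc KD] by blast
  have La0: "La \<ge> 0" using lipschitz_on_nonneg[OF La] .
  define L where "L = La * Cr + La * Cz + La + \<bar>M\<bar>"
  show ?thesis
  proof (intro exI[of _ L] ballI)
    fix r1 r2 :: "'a \<Rightarrow> real" and z1 z2 :: 'a assume r1: "r1 \<in> A2 a" and r2: "r2 \<in> A2 a" and z1: "z1 \<in> ?S" and z2: "z2 \<in> ?S"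
    define l1 where "l1 = sph_star r1 g z1"
    define l2 where "l2 = sph_star r2 g z2"
    define N where "N = l2norm_sph (\<lambda>\<theta>. r1 \<theta> - r2 \<theta>)"
    define d where "d = norm (z1 - z2)"
    have N0: "N \<ge> 0" unfolding N_def l2norm_sph_def by simp
    have d0: "d \<ge> 0" unfolding d_def by simp
    have k1: "(l1, z1) \<in> K" unfolding K_def l1_def using lo[OF r1 z1] up[OF r1 z1] z1 by auto
    have k2: "(l2, z2) \<in> K" unfolding K_def l2_def using lo[OF r2 z2] up[OF r2 z2] z2 by auto
    have "\<bar>l1 - l2\<bar> \<le> \<bar>sph_star r1 g z1 - sph_star r2 g z1\<bar> + \<bar>sph_star r2 g z1 - sph_star r2 g z2\<bar>"
      unfolding l1_def l2_def by linarith
    also have "\<dots> \<le> Cr * N + Cz * d" unfolding N_def d_def using dr[OF r1 r2 z1] dz[OF r2 z1 z2] by linarith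
    finally have dl: "\<bar>l1 - l2\<bar> \<le> Cr * N + Cz * d" .
    have "\<bar>\<alpha> l1 z1 - \<alpha> l2 z2\<bar> \<le> La * dist (l1, z1) (l2, z2)"
      using lipschitz_onD[OF La k1 k2] by (simp add: dist_real_def)
    also have "dist (l1, z1) (l2, z2) \<le> \<bar>l1 - l2\<bar> + d"
      unfolding dist_Pair_Pair d_def dist_real_def
      using sqrt_sum_squares_le_sum_abs[of "l1 - l2" "norm (z1 - z2)"] by (simp add: dist_norm)
    finally have da: "\<bar>\<alpha> l1 z1 - \<alpha> l2 z2\<bar> \<le> La * (Cr * N + Cz * d + d)"
      using La0 dl by (smt (verit) mult_left_mono)
    have a2: "0 \<le> \<alpha> l2 z2 \<and> \<alpha> l2 z2 \<le> \<bar>M\<bar>"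
    proof -
      have "l2 > 0" using lo[OF r2 z2] a unfolding l2_def by linarith
      then have "0 \<le> \<alpha> l2 z2 \<and> \<alpha> l2 z2 < l2" using alpha_bounds z2 by blast
      then show ?thesis using up[OF r2 z2] unfolding l2_def by linarith
    qed
    have "norm (\<alpha> l1 z1 *\<^sub>R z1 - \<alpha> l2 z2 *\<^sub>R z2) = norm ((\<alpha> l1 z1 - \<alpha> l2 z2) *\<^sub>R z1 + \<alpha> l2 z2 *\<^sub>R (z1 - z2))"
      by (simp add: algebra_simps)
    also have "\<dots> \<le> \<bar>\<alpha> l1 z1 - \<alpha> l2 z2\<bar> + \<alpha> l2 z2 * d"
      using norm_triangle_ineq[of "(\<alpha> l1 z1 - \<alpha> l2 z2) *\<^sub>R z1" "\<alpha> l2 z2 *\<^sub>R (z1 - z2)"] z1 a2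
      unfolding d_def by simp
    also have "\<dots> \<le> La * (Cr * N + Cz * d + d) + \<bar>M\<bar> * d"
      using da a2 d0 by (smt (verit) mult_right_mono)
    also have "\<dots> \<le> L * (N + d)"
      unfolding L_def using La0 Cr0 Cz0 N0 d0
      by (simp add: algebra_simps add_mono mult_nonneg_nonneg)
    finally show "norm (\<alpha> (sph_star r1 g z1) z1 *\<^sub>R z1 - \<alpha> (sph_star r2 g z2) z2 *\<^sub>R z2)
             \<le> L * (l2norm_sph (\<lambda>\<theta>. r1 \<theta> - r2 \<theta>) + norm (z1 - z2))"
      unfolding l1_def l2_def N_def d_def .
  qed
qed

end
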